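(* For each $n$ let $m=m_n$ be the order of some element of $S_n$, and assume $m_n$ has a divisor $d_n$ with $3\leq d_n$ and $d_n=o(n^{1/2})$. Then there are functions $a(n)=o(n^{1/2})$ and $b(n)=o(n)$ such that the proportion of elements of order $m_n$ in $S_n$ having at most $a(n)$ fixed points and at most $b(n)$ $2$-cycles tends to $1$ as $n\to\infty$.
   Context: Asymptotic notation is with respect to $n\to\infty$. *)

theory Defs
  imports "HOL-Analysis.Analysis" "HOL-Combinatorics.Permutations" "HOL-Library.Landau_Symbols"
begin

text \<open>Elements of S_n are the permutations of {..<n}.\<close>

definition perm_order :: "(nat \<Rightarrow> nat) \<Rightarrow> nat" where
  "perm_order p = (LEAST k. 0 < k \<and> (p ^^ k) = id)"

definition num_fixed_points :: "nat \<Rightarrow> (nat \<Rightarrow> nat) \<Rightarrow> nat" where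
  "num_fixed_points n p = card {i. i < n \<and> p i = i}"

definition num_2cycles :: "nat \<Rightarrow> (nat \<Rightarrow> nat) \<Rightarrow> nat" where
  "num_2cycles n p = card {{i, p i} | i. i < n \<and> p i \<noteq> i \<and> p (p i) = i}"

end

theory Submission imports Defs "HOL-Combinatorics.Cycles" "HOL-Real_Asymp.Real_Asymp" begin

lemma funpow_comm: "f \<circ> g = g \<circ> f \<Longrightarrow> g \<circ> f ^^ k = f ^^ k \<circ> g"
proof (induction k)
  case (Suc k)
  have "g \<circ> f ^^ Suc k = (g \<circ> f) \<circ> f ^^ k" by (simp add: comp_assoc)
  also have "\<dots> = f \<circ> (g \<circ> f ^^ k)" by (simp only: Suc.prems[symmetric] comp_assoc)
  also have "\<dots> = f \<circ> (f ^^ k \<circ> g)" by (simp only: Suc.IH[OF Suc.prems])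
  also have "\<dots> = f ^^ Suc k \<circ> g" by (simp add: comp_assoc)
  finally show ?case .
qed simp

lemma funpow_comp_comm: "f \<circ> g = g \<circ> f \<Longrightarrow> (f \<circ> g) ^^ k = f ^^ k \<circ> g ^^ k"
proof (induction k)
  case (Suc k)
  have "(f \<circ> g) ^^ Suc k = f \<circ> g \<circ> (f ^^ k \<circ> g ^^ k)" by (simp only: funpow.simps Suc.IH[OF Suc.prems])
  also have "\<dots> = f \<circ> (g \<circ> f ^^ k) \<circ> g ^^ k" by (simp add: comp_assoc)
  also have "\<dots> = f \<circ> (f ^^ k \<circ> g) \<circ> g ^^ k" using funpow_comm[OF Suc.prems] by simp
  also have "\<dots> = f ^^ Suc k \<circ> g ^^ Suc k" by (simp add: comp_assoc funpow_Suc_right)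
  finally show ?case .
qed simp

lemma disj_pow:
  assumes g: "g permutes B" and f: "inj f" and fx: "\<forall>x\<in>B. f x = x"
  shows "(f \<circ> g) ^^ k = id \<longleftrightarrow> f ^^ k = id \<and> g ^^ k = id"
proof -
  have comm: "f \<circ> g = g \<circ> f"
  proof
    fix x show "(f \<circ> g) x = (g \<circ> f) x"
    proof (cases "x \<in> B")
      case True
      then show ?thesis using fx permutes_in_image[OF g] by simp
    next
      case False
      have "f x \<notin> B"
      proof
        assume "f x \<in> B" then have "f (f x) = f x" using fx by simp
        then have "f x = x" using f by (simp add: inj_eq)
        with False \<open>f x \<in> B\<close> show False by simp
      qed
      then show ?thesis using False permutes_not_in[OF g] by simp
    qed
  qed
  have fk: "\<forall>x\<in>B. (f ^^ k) x = x"
    using fx by (induction k) auto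
  have gk: "(g ^^ k) permutes B" by (rule permutes_funpow[OF g])
  show ?thesis
  proof
    assume H: "(f \<circ> g) ^^ k = id"
    have H2: "(f ^^ k) ((g ^^ k) x) = x" for x
      using H funpow_comp_comm[OF comm, of k] by (metis comp_apply id_apply)
    have G: "(g ^^ k) x = x" for x
    proof (cases "x \<in> B")
      case True
      then have "(g ^^ k) x \<in> B" using permutes_in_image[OF gk] by simp
      then show ?thesis using H2[of x] fk by simp
    next
      case False then show ?thesis using permutes_not_in[OF gk] by simp
    qed
    then have "g ^^ k = id" by auto
    moreover have "f ^^ k = id" using H2 G by auto
    ultimately show "f ^^ k = id \<and> g ^^ k = id" by simp
  next
    assume "f ^^ k = id \<and> g ^^ k = id"
    then show "(f \<circ> g) ^^ k = id" using funpow_comp_comm[OF comm, of k] by simp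
  qed
qed

lemma cyc_apply_nth:
  assumes "distinct xs" "i < length xs"
  shows "(cycle_of_list xs ^^ k) (xs ! i) = xs ! ((k + i) mod length xs)"
proof -
  have "map (cycle_of_list xs ^^ k) xs = rotate k xs" by (rule cyclic_rotation[OF assms(1)])
  then have "map (cycle_of_list xs ^^ k) xs ! i = rotate k xs ! i" by simp
  then show ?thesis using assms by (simp add: nth_rotate)
qed

lemma cyc_pow_id:
  assumes "distinct xs" "xs \<noteq> []"
  shows "cycle_of_list xs ^^ k = id \<longleftrightarrow> length xs dvd k"
proof
  assume "cycle_of_list xs ^^ k = id"
  then have "(cycle_of_list xs ^^ k) (xs ! 0) = xs ! 0" by simp
  then have "xs ! (k mod length xs) = xs ! 0" using cyc_apply_nth[OF assms(1), of 0 k] assms by simp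
  then have "k mod length xs = 0" using assms nth_eq_iff_index_eq by fastforce
  then show "length xs dvd k" by auto
next
  assume d: "length xs dvd k"
  show "cycle_of_list xs ^^ k = id"
  proof
    fix x show "(cycle_of_list xs ^^ k) x = id x"
    proof (cases "x \<in> set xs")
      case True
      then obtain i where i: "i < length xs" "x = xs ! i" by (auto simp: in_set_conv_nth)
      then show ?thesis using cyc_apply_nth[OF assms(1) i(1), of k] d
        by (simp add: mod_add_left_eq[symmetric])
    next
      case False
      then show ?thesis using permutes_not_in[OF permutes_funpow[OF cycle_permutes]] by simp
    qed
  qed
qed

lemma recon:
  assumes "distinct xs" "xs \<noteq> []" "\<forall>x\<in>set xs. h x = cycle_of_list xs x"
  shows "xs = map (\<lambda>i. (h ^^ i) (hd xs)) [0..<length xs]"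
proof -
  let ?c = "cycle_of_list xs"
  have P: "\<forall>x\<in>set xs. (h ^^ i) x = (?c ^^ i) x" for i
  proof (induction i)
    case (Suc i)
    show ?case
    proof
      fix x assume x: "x \<in> set xs"
      have m: "(?c ^^ i) x \<in> set xs"
        using x by (simp add: permutes_in_image[OF permutes_funpow[OF cycle_permutes]])
      have "(h ^^ Suc i) x = h ((h ^^ i) x)" by simp
      also have "\<dots> = h ((?c ^^ i) x)" using Suc.IH x by simp
      also have "\<dots> = ?c ((?c ^^ i) x)" using assms(3) m by blast
      also have "\<dots> = (?c ^^ Suc i) x" by simp
      finally show "(h ^^ Suc i) x = (?c ^^ Suc i) x" .
    qed
  qed simp
  show ?thesis
  proof (rule nth_equalityI)
    fix i assume i: "i < length xs"
    have h0: "hd xs = xs ! 0" using assms(2) by (simp add: hd_conv_nth)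
    have "hd xs \<in> set xs" using assms(2) by simp
    then have "(h ^^ i) (hd xs) = (?c ^^ i) (xs ! 0)" using P h0 by simp
    also have "\<dots> = xs ! i" using cyc_apply_nth[OF assms(1), of 0 i] i assms(2) by simp
    finally show "xs ! i = map (\<lambda>i. (h ^^ i) (hd xs)) [0..<length xs] ! i" using i by simp
  qed simp
qed

lemma perm_order_props:
  assumes "permutation p"
  shows "0 < perm_order p" "p ^^ perm_order p = id" "p ^^ k = id \<Longrightarrow> perm_order p dvd k"
proof -
  obtain n where n: "p ^^ n = id" "n > 0" using permutation_is_nilpotent[OF assms] by blast
  have ex: "\<exists>k. 0 < k \<and> p ^^ k = id" using n by blast
  show 1: "0 < perm_order p" and 2: "p ^^ perm_order p = id"
    unfolding perm_order_def using LeastI_ex[OF ex] by auto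
  assume k: "p ^^ k = id"
  let ?m = "perm_order p"
  have "p ^^ (?m * q) = id" for q by (induction q) (simp_all add: funpow_add 2)
  have "p ^^ k = p ^^ (?m * (k div ?m) + k mod ?m)" by simp
  also have "\<dots> = p ^^ (?m * (k div ?m)) \<circ> p ^^ (k mod ?m)" by (rule funpow_add)
  finally have "p ^^ (k mod ?m) = id"
    using k \<open>p ^^ (?m * (k div ?m)) = id\<close> by simp
  have "k mod ?m = 0"
  proof (rule ccontr)
    assume "k mod ?m \<noteq> 0"
    then have "?m \<le> k mod ?m" 
      using \<open>p ^^ (k mod ?m) = id\<close> unfolding perm_order_def by (intro Least_le) simp
    with 1 show False using mod_less_divisor[OF 1, of k] by simp
  qed
  then show "perm_order p dvd k" by auto
qed


lemma perm_order_cong: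
  assumes "\<forall>k. (\<tau> ^^ k = id) = (\<sigma> ^^ k = id)"
  shows "perm_order \<tau> = perm_order \<sigma>"
  unfolding perm_order_def using assms by simp

lemma prod_lb:
  assumes "3 \<le> d" "2 * d \<le> k"
  shows "(real k / 2) ^ 3 \<le> real (\<Prod>{k - d + 1..k})"
proof -
  have sub: "{k-2..k} \<subseteq> {k - d + 1..k}" using assms by auto
  have pos: "0 < \<Prod>{k - d + 1..k}" using assms by (intro prod_pos) auto
  have "\<Prod>{k-2..k} dvd \<Prod>{k - d + 1..k}" by (rule prod_dvd_prod_subset[OF _ sub]) simp
  then have le: "\<Prod>{k-2..k} \<le> \<Prod>{k - d + 1..k}" using pos by (rule dvd_imp_le)
  have e: "{k-2..k} = {k-2, k-1, k}" using assms by auto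
  obtain j where j: "k = j + 6" using assms by (metis add.commute le_add_diff_inverse2 le_trans mult_le_mono2 numeral_le_iff semiring_norm(69) num_double numeral_times_numeral)
  have e2: "{k-2..k} = {j+4, j+5, j+6}" using j by auto
  have "\<Prod>{k-2..k} = (k-2) * ((k-1) * k)" unfolding e2 by (simp add: j algebra_simps)
  then have "real (\<Prod>{k-2..k}) = real (k-2) * (real (k-1) * real k)" by simp
  moreover have h: "real k / 2 \<le> real (k-2)" "real k / 2 \<le> real (k-1)" "real k / 2 \<le> real k"
    using assms by (simp_all add: of_nat_diff)
  moreover have "(real k/2)^3 = (real k/2) * ((real k/2) * (real k/2))" by (simp add: power3_eq_cube)
  moreover have "(real k/2) * ((real k/2) * (real k/2)) \<le> real (k-2) * (real (k-1) * real k)"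
    using h by (intro mult_mono) auto
  ultimately have "(real k / 2) ^ 3 \<le> real (\<Prod>{k-2..k})"
    by simp
  also have "\<dots> \<le> real (\<Prod>{k - d + 1..k})" using le by (simp only: of_nat_le_iff)
  finally show ?thesis .
qed

definition Lst :: "nat \<Rightarrow> nat set \<Rightarrow> nat list set" where
  "Lst d A = {xs. length xs = d \<and> distinct xs \<and> set xs \<subseteq> A}"

lemma count_generic:
  fixes Bad :: "'a set" and R :: "'a \<Rightarrow> nat set" and \<Phi> :: "'a \<times> nat list \<Rightarrow> 'b"
  assumes fB: "finite Bad" and fR: "\<forall>\<sigma>\<in>Bad. finite (R \<sigma>)"
    and big: "\<forall>\<sigma>\<in>Bad. A < real (card (R \<sigma>))"
    and d: "3 \<le> d" "real (2 * d) \<le> A"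
    and img: "\<Phi> ` Sigma Bad (\<lambda>\<sigma>. Lst d (R \<sigma>)) \<subseteq> T" and fT: "finite T"
    and inj: "inj_on \<Phi> (Sigma Bad (\<lambda>\<sigma>. Lst d (R \<sigma>)))"
  shows "real (card Bad) * (A / 2) ^ 3 \<le> real (card T)"
proof -
  have A0: "0 \<le> A" using d by simp
  have cardL: "(A / 2) ^ 3 \<le> real (card (Lst d (R \<sigma>)))" and finL: "finite (Lst d (R \<sigma>))"
    if s: "\<sigma> \<in> Bad" for \<sigma>
  proof -
    let ?k = "card (R \<sigma>)"
    have k: "2 * d \<le> ?k" using big s d by fastforce
    have c: "card (Lst d (R \<sigma>)) = \<Prod>{?k - d + 1..?k}"
      unfolding Lst_def using card_lists_distinct_length_eq[of "R \<sigma>" d] fR s k by auto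
    have "(A / 2) ^ 3 \<le> (real ?k / 2) ^ 3"
      using big s A0 by (intro power_mono) auto
    also have "\<dots> \<le> real (card (Lst d (R \<sigma>)))" unfolding c by (rule prod_lb[OF d(1) k])
    finally show "(A / 2) ^ 3 \<le> real (card (Lst d (R \<sigma>)))" .
    have "0 < \<Prod>{?k - d + 1..?k}" using k d by (intro prod_pos) auto
    then show "finite (Lst d (R \<sigma>))" using c card_ge_0_finite by metis
  qed
  have "real (card Bad) * (A / 2) ^ 3 = (\<Sum>\<sigma>\<in>Bad. (A / 2) ^ 3)" by simp
  also have "\<dots> \<le> (\<Sum>\<sigma>\<in>Bad. real (card (Lst d (R \<sigma>))))" using cardL by (intro sum_mono) auto
  also have "\<dots> = real (card (Sigma Bad (\<lambda>\<sigma>. Lst d (R \<sigma>))))"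
    using card_SigmaI[OF fB, of "\<lambda>\<sigma>. Lst d (R \<sigma>)"] finL by simp
  also have "card (Sigma Bad (\<lambda>\<sigma>. Lst d (R \<sigma>))) = card (\<Phi> ` Sigma Bad (\<lambda>\<sigma>. Lst d (R \<sigma>)))"
    using card_image[OF inj] by simp
  also have "\<dots> \<le> card T" by (rule card_mono[OF fT img])
  finally show ?thesis by simp
qed

lemma fixed_step:
  assumes \<sigma>: "\<sigma> permutes {..<n}" and dv: "length xs dvd perm_order \<sigma>"
    and xs: "distinct xs" "xs \<noteq> []" "set xs \<subseteq> {i. i < n \<and> \<sigma> i = i}"
  shows "(\<sigma> \<circ> cycle_of_list xs) permutes {..<n}"
    "perm_order (\<sigma> \<circ> cycle_of_list xs) = perm_order \<sigma>"
    "xs = map (\<lambda>i. ((\<sigma> \<circ> cycle_of_list xs) ^^ i) (hd xs)) [0..<length xs]"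
    "\<sigma> = (\<lambda>y. if y \<in> set xs then y else (\<sigma> \<circ> cycle_of_list xs) y)"
proof -
  let ?c = "cycle_of_list xs"
  have cp: "?c permutes set xs" by (rule cycle_permutes)
  have sub: "set xs \<subseteq> {..<n}" using xs by auto
  show "(\<sigma> \<circ> ?c) permutes {..<n}"
    by (rule permutes_compose[OF permutes_subset[OF cp sub] \<sigma>])
  have perm: "permutation \<sigma>" using \<sigma> permutation_permutes by blast
  have fx: "\<forall>x\<in>set xs. \<sigma> x = x" using xs by auto
  have "\<forall>k. ((\<sigma> \<circ> ?c) ^^ k = id) = (\<sigma> ^^ k = id)"
  proof
    fix k
    have "((\<sigma> \<circ> ?c) ^^ k = id) = (\<sigma> ^^ k = id \<and> length xs dvd k)"
      using disj_pow[OF cp permutes_inj[OF \<sigma>] fx] cyc_pow_id[OF xs(1,2)] by simp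
    also have "\<dots> = (\<sigma> ^^ k = id)"
      using perm_order_props(3)[OF perm, of k] dv dvd_trans by blast
    finally show "((\<sigma> \<circ> ?c) ^^ k = id) = (\<sigma> ^^ k = id)" .
  qed
  then show "perm_order (\<sigma> \<circ> ?c) = perm_order \<sigma>" by (rule perm_order_cong)
  have "\<forall>x\<in>set xs. (\<sigma> \<circ> ?c) x = ?c x"
    using fx permutes_in_image[OF cp] by simp
  then show "xs = map (\<lambda>i. ((\<sigma> \<circ> ?c) ^^ i) (hd xs)) [0..<length xs]"
    by (rule recon[OF xs(1,2)])
  show "\<sigma> = (\<lambda>y. if y \<in> set xs then y else (\<sigma> \<circ> ?c) y)"
  proof
    fix y show "\<sigma> y = (if y \<in> set xs then y else (\<sigma> \<circ> ?c) y)"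
      using fx permutes_not_in[OF cp, of y] by auto
  qed
qed


definition R2 :: "nat \<Rightarrow> (nat \<Rightarrow> nat) \<Rightarrow> nat set" where
  "R2 n \<sigma> = {i. i < n \<and> \<sigma> i \<noteq> i \<and> \<sigma> (\<sigma> i) = i \<and> i < \<sigma> i}"

definition tT :: "(nat \<Rightarrow> nat) \<Rightarrow> nat list \<Rightarrow> nat \<Rightarrow> nat" where
  "tT \<sigma> xs = (\<lambda>y. if y \<in> set xs \<union> \<sigma> ` set xs then \<sigma> y else y)"

definition tauT :: "(nat \<Rightarrow> nat) \<Rightarrow> nat list \<Rightarrow> nat \<Rightarrow> nat" where
  "tauT \<sigma> xs = (\<sigma> \<circ> tT \<sigma> xs) \<circ> (cycle_of_list (map \<sigma> xs) \<circ> cycle_of_list xs)"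

lemma num_2cycles_eq:
  assumes \<sigma>: "\<sigma> permutes {..<n}"
  shows "num_2cycles n \<sigma> = card (R2 n \<sigma>)"
proof -
  have e: "{{i, \<sigma> i} | i. i < n \<and> \<sigma> i \<noteq> i \<and> \<sigma> (\<sigma> i) = i} = (\<lambda>i. {i, \<sigma> i}) ` R2 n \<sigma>"
  proof
    show "(\<lambda>i. {i, \<sigma> i}) ` R2 n \<sigma> \<subseteq> {{i, \<sigma> i} | i. i < n \<and> \<sigma> i \<noteq> i \<and> \<sigma> (\<sigma> i) = i}"
      unfolding R2_def by blast
    show "{{i, \<sigma> i} | i. i < n \<and> \<sigma> i \<noteq> i \<and> \<sigma> (\<sigma> i) = i} \<subseteq> (\<lambda>i. {i, \<sigma> i}) ` R2 n \<sigma>"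
    proof
      fix s assume "s \<in> {{i, \<sigma> i} | i. i < n \<and> \<sigma> i \<noteq> i \<and> \<sigma> (\<sigma> i) = i}"
      then obtain i where i: "s = {i, \<sigma> i}" "i < n" "\<sigma> i \<noteq> i" "\<sigma> (\<sigma> i) = i" by blast
      show "s \<in> (\<lambda>i. {i, \<sigma> i}) ` R2 n \<sigma>"
      proof (cases "i < \<sigma> i")
        case True
        then have "i \<in> R2 n \<sigma>" using i unfolding R2_def by simp
        then show ?thesis using i by blast
      next
        case False
        have "\<sigma> i < n" using permutes_in_image[OF \<sigma>] i by simp
        then have "\<sigma> i \<in> R2 n \<sigma>" using i False unfolding R2_def by auto
        moreover have "s = {\<sigma> i, \<sigma> (\<sigma> i)}" using i by auto
        ultimately show ?thesis by blast
      qed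
    qed
  qed
  have "inj_on (\<lambda>i. {i, \<sigma> i}) (R2 n \<sigma>)"
  proof (rule inj_onI)
    fix x y assume x: "x \<in> R2 n \<sigma>" and y: "y \<in> R2 n \<sigma>" and eq: "{x, \<sigma> x} = {y, \<sigma> y}"
    show "x = y"
    proof (rule ccontr)
      assume "x \<noteq> y"
      then have "x = \<sigma> y" "y = \<sigma> x" using eq by (auto simp: doubleton_eq_iff)
      then show False using x y unfolding R2_def by auto
    qed
  qed
  then show ?thesis unfolding num_2cycles_def e by (simp add: card_image)
qed

lemma twocyc_step:
  assumes \<sigma>: "\<sigma> permutes {..<n}" and dv: "length xs dvd perm_order \<sigma>"
    and xs: "distinct xs" "xs \<noteq> []" "set xs \<subseteq> R2 n \<sigma>"
    and z: "z \<in> R2 n \<sigma>" "z \<notin> set xs"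
  shows "tauT \<sigma> xs permutes {..<n}" "perm_order (tauT \<sigma> xs) = perm_order \<sigma>"
    "xs = map (\<lambda>i. (tauT \<sigma> xs ^^ i) (hd xs)) [0..<length xs]"
    "map \<sigma> xs = map (\<lambda>i. (tauT \<sigma> xs ^^ i) (\<sigma> (hd xs))) [0..<length xs]"
    "\<forall>y. y \<notin> set xs \<union> \<sigma> ` set xs \<longrightarrow> \<sigma> y = tauT \<sigma> xs y"
proof -
  define S where "S = set xs \<union> \<sigma> ` set xs"
  define ys where "ys = map \<sigma> xs"
  define t where "t = tT \<sigma> xs"
  define \<rho> where "\<rho> = \<sigma> \<circ> t"
  define c1 where "c1 = cycle_of_list xs"
  define c2 where "c2 = cycle_of_list ys"
  have tau: "tauT \<sigma> xs = \<rho> \<circ> (c2 \<circ> c1)" unfolding tauT_def \<rho>_def t_def c1_def c2_def ys_def by simp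
  have inj\<sigma>: "inj \<sigma>" by (rule permutes_inj[OF \<sigma>])
  have Sxs: "x < n \<and> \<sigma> x \<noteq> x \<and> \<sigma> (\<sigma> x) = x \<and> x < \<sigma> x" if "x \<in> set xs" for x
    using xs(3) that unfolding R2_def by auto
  have S1: "\<sigma> y \<in> S \<and> \<sigma> (\<sigma> y) = y" if "y \<in> S" for y
    using that Sxs unfolding S_def by auto
  have setys: "set ys = \<sigma> ` set xs" unfolding ys_def by simp
  have disj: "set xs \<inter> set ys = {}"
  proof (rule ccontr)
    assume "set xs \<inter> set ys \<noteq> {}"
    then obtain x y where "y \<in> set xs" "x \<in> set xs" "y = \<sigma> x" unfolding setys by blast
    then show False using Sxs[of x] Sxs[of y] by auto
  qed
  have dys: "distinct ys" unfolding ys_def using xs(1) inj\<sigma>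
    by (simp add: distinct_map inj_on_subset[OF inj\<sigma> subset_UNIV])
  have ysne: "ys \<noteq> []" "length ys = length xs" "hd ys = \<sigma> (hd xs)"
    unfolding ys_def using xs(2) by (auto simp: hd_map)
  have tS: "t y = (if y \<in> S then \<sigma> y else y)" for y unfolding t_def tT_def S_def by simp
  have tt: "t (t y) = y" for y using S1[of y] tS by auto
  have tperm: "t permutes S"
    unfolding permutes_def
  proof (intro conjI allI impI)
    fix x assume "x \<notin> S" then show "t x = x" using tS by simp
  next
    fix y show "\<exists>!x. t x = y"
    proof
      show "t (t y) = y" by (rule tt)
      fix x assume "t x = y" then show "x = t y" using tt by metis
    qed
  qed
  have Ssub: "S \<subseteq> {..<n}" unfolding S_def using Sxs permutes_in_image[OF \<sigma>] by auto
  have \<rho>perm: "\<rho> permutes {..<n}" unfolding \<rho>_def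
    by (rule permutes_compose[OF permutes_subset[OF tperm Ssub] \<sigma>])
  have inj\<rho>: "inj \<rho>" by (rule permutes_inj[OF \<rho>perm])
  have \<rho>fix: "\<forall>y\<in>S. \<rho> y = y" unfolding \<rho>_def using S1 tS by simp
  have \<rho>out: "\<rho> y = \<sigma> y" if "y \<notin> S" for y unfolding \<rho>_def using that tS by simp
  have \<sigma>eq: "\<sigma> = \<rho> \<circ> t" unfolding \<rho>_def using tt by (simp add: fun_eq_iff)
  have c1perm: "c1 permutes set xs" unfolding c1_def by (rule cycle_permutes)
  have c2perm: "c2 permutes set ys" unfolding c2_def by (rule cycle_permutes)
  have xsS: "set xs \<subseteq> S" and ysS: "set ys \<subseteq> S" unfolding S_def setys by auto
  have c21perm: "(c2 \<circ> c1) permutes S"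
    by (rule permutes_compose[OF permutes_subset[OF c1perm xsS] permutes_subset[OF c2perm ysS]])
  have c2fix: "\<forall>x\<in>set xs. c2 x = x"
  proof
    fix x assume "x \<in> set xs" then have "x \<notin> set ys" using disj by blast
    then show "c2 x = x" unfolding c2_def by (rule id_outside_supp)
  qed
  have c1fix: "\<forall>x\<in>set ys. c1 x = x"
  proof
    fix x assume "x \<in> set ys" then have "x \<notin> set xs" using disj by blast
    then show "c1 x = x" unfolding c1_def by (rule id_outside_supp)
  qed
  have c21pow: "((c2 \<circ> c1) ^^ k = id) = (length xs dvd k)" for k
    using disj_pow[OF c1perm permutes_inj[OF c2perm] c2fix, of k]
      cyc_pow_id[OF xs(1,2), of k] cyc_pow_id[OF dys ysne(1), of k] ysne(2)
    unfolding c1_def c2_def by simp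
  have taupow: "(tauT \<sigma> xs ^^ k = id) = (\<rho> ^^ k = id \<and> length xs dvd k)" for k
    unfolding tau using disj_pow[OF c21perm inj\<rho> \<rho>fix, of k] c21pow by simp
  have \<sigma>pow: "(\<sigma> ^^ k = id) = (\<rho> ^^ k = id \<and> t ^^ k = id)" for k
    using disj_pow[OF tperm inj\<rho> \<rho>fix, of k] \<sigma>eq by simp
  have tk: "t ^^ k = (if even k then id else t)" for k
    by (induction k) (auto simp: fun_eq_iff tt)
  have hdS: "hd xs \<in> S" using xs(2) xsS by auto
  have tne: "t \<noteq> id"
  proof
    assume "t = id"
    then have "t (hd xs) = hd xs" by simp
    then show False using tS hdS Sxs[of "hd xs"] xs(2) by auto
  qed
  have tpow: "(t ^^ k = id) = even k" for k using tk[of k] tne by auto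
  have zR: "z < n \<and> \<sigma> z \<noteq> z \<and> \<sigma> (\<sigma> z) = z \<and> z < \<sigma> z" using z unfolding R2_def by auto
  have zS: "z \<notin> S"
  proof
    assume "z \<in> S"
    then obtain x where x: "x \<in> set xs" "z = \<sigma> x" using z(2) unfolding S_def by auto
    then show False using Sxs[OF x(1)] zR by auto
  qed
  have zS2: "\<sigma> z \<notin> S" using S1[of "\<sigma> z"] zR zS by auto
  have \<rho>z: "(\<rho> ^^ k) z = (if even k then z else \<sigma> z)" for k
  proof (induction k)
    case (Suc k)
    then show ?case using \<rho>out[OF zS] \<rho>out[OF zS2] zR by auto
  qed simp
  have \<rho>even: "even k" if "\<rho> ^^ k = id" for k
    using \<rho>z[of k] that zR by (auto split: if_splits)
  have "\<forall>k. (tauT \<sigma> xs ^^ k = id) = (\<sigma> ^^ k = id)"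
  proof
    fix k
    have perm: "permutation \<sigma>" using \<sigma> permutation_permutes by blast
    show "(tauT \<sigma> xs ^^ k = id) = (\<sigma> ^^ k = id)"
      unfolding taupow \<sigma>pow tpow
      using \<rho>even perm_order_props(3)[OF perm, of k] dv dvd_trans \<sigma>pow tpow by metis
  qed
  then show "perm_order (tauT \<sigma> xs) = perm_order \<sigma>" by (rule perm_order_cong)
  show "tauT \<sigma> xs permutes {..<n}" unfolding tau
    by (rule permutes_compose[OF permutes_subset[OF c21perm Ssub] \<rho>perm])
  have "\<forall>x\<in>set xs. tauT \<sigma> xs x = cycle_of_list xs x"
  proof
    fix x assume x: "x \<in> set xs"
    have "c1 x \<in> set xs" using permutes_in_image[OF c1perm] x by simp
    then show "tauT \<sigma> xs x = cycle_of_list xs x"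
      unfolding tau using c2fix \<rho>fix xsS c1_def by auto
  qed
  then show "xs = map (\<lambda>i. (tauT \<sigma> xs ^^ i) (hd xs)) [0..<length xs]"
    by (rule recon[OF xs(1,2)])
  have "\<forall>x\<in>set ys. tauT \<sigma> xs x = cycle_of_list ys x"
  proof
    fix x assume x: "x \<in> set ys"
    have "c2 x \<in> set ys" using permutes_in_image[OF c2perm] x by simp
    then show "tauT \<sigma> xs x = cycle_of_list ys x"
      unfolding tau using c1fix x \<rho>fix ysS c2_def by auto
  qed
  then have "ys = map (\<lambda>i. (tauT \<sigma> xs ^^ i) (hd ys)) [0..<length ys]"
    by (rule recon[OF dys ysne(1)])
  then show "map \<sigma> xs = map (\<lambda>i. (tauT \<sigma> xs ^^ i) (\<sigma> (hd xs))) [0..<length xs]"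
    using ysne unfolding ys_def by simp
  show "\<forall>y. y \<notin> set xs \<union> \<sigma> ` set xs \<longrightarrow> \<sigma> y = tauT \<sigma> xs y"
  proof (intro allI impI)
    fix y assume y: "y \<notin> set xs \<union> \<sigma> ` set xs"
    then have "y \<notin> S" unfolding S_def .
    moreover have "c1 y = y" using y permutes_not_in[OF c1perm] by simp
    moreover have "c2 y = y" using y permutes_not_in[OF c2perm] setys by simp
    ultimately show "\<sigma> y = tauT \<sigma> xs y" unfolding tau using \<rho>out by simp
  qed
qed


lemma finite_Pn: "finite {p :: nat \<Rightarrow> nat. p permutes {..<(n::nat)} \<and> P p}"
  by (rule finite_subset[OF _ finite_permutations[OF finite_lessThan[of n]]]) auto

lemma badF_bound:
  fixes n d m :: nat and A :: real
  defines "Pn \<equiv> {p. p permutes {..<n} \<and> perm_order p = m}"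
  assumes d: "3 \<le> d" "d dvd m" "real (2 * d) \<le> A"
  shows "real (card {\<sigma>\<in>Pn. A < real (num_fixed_points n \<sigma>)}) * (A / 2) ^ 3 \<le> real (card (Pn \<times> {..<n}))"
proof (rule count_generic[where R = "\<lambda>\<sigma>. {i. i < n \<and> \<sigma> i = i}" and d = d
      and \<Phi> = "\<lambda>(\<sigma>, xs). (\<sigma> \<circ> cycle_of_list xs, hd xs)"])
  let ?Bad = "{\<sigma>\<in>Pn. A < real (num_fixed_points n \<sigma>)}"
  let ?Sg = "Sigma ?Bad (\<lambda>\<sigma>. Lst d {i. i < n \<and> \<sigma> i = i})"
  have fP: "finite Pn" unfolding Pn_def by (rule finite_Pn)
  then show "finite ?Bad" by simp
  show "\<forall>\<sigma>\<in>?Bad. finite {i. i < n \<and> \<sigma> i = i}" by simp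
  show "\<forall>\<sigma>\<in>?Bad. A < real (card {i. i < n \<and> \<sigma> i = i})" unfolding num_fixed_points_def by simp
  show "3 \<le> d" "real (2 * d) \<le> A" using d by auto
  show "finite (Pn \<times> {..<n})" using fP by simp
  have st: "(\<sigma> \<circ> cycle_of_list xs) permutes {..<n}"
    "perm_order (\<sigma> \<circ> cycle_of_list xs) = perm_order \<sigma>"
    "xs = map (\<lambda>i. ((\<sigma> \<circ> cycle_of_list xs) ^^ i) (hd xs)) [0..<length xs]"
    "\<sigma> = (\<lambda>y. if y \<in> set xs then y else (\<sigma> \<circ> cycle_of_list xs) y)"
    "length xs = d" "hd xs < n"
    if "(\<sigma>, xs) \<in> ?Sg" for \<sigma> xs
  proof -
    have s: "\<sigma> permutes {..<n}" "perm_order \<sigma> = m" "length xs = d" "distinct xs"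
      "set xs \<subseteq> {i. i < n \<and> \<sigma> i = i}"
      using that unfolding Pn_def Lst_def by auto
    have ne: "xs \<noteq> []" using s(3) d by auto
    have dv: "length xs dvd perm_order \<sigma>" using s d by simp
    note fs = fixed_step[OF s(1) dv s(4) ne s(5)]
    show "(\<sigma> \<circ> cycle_of_list xs) permutes {..<n}"
      "perm_order (\<sigma> \<circ> cycle_of_list xs) = perm_order \<sigma>"
      "xs = map (\<lambda>i. ((\<sigma> \<circ> cycle_of_list xs) ^^ i) (hd xs)) [0..<length xs]"
      "\<sigma> = (\<lambda>y. if y \<in> set xs then y else (\<sigma> \<circ> cycle_of_list xs) y)"
      using fs by auto
    show "length xs = d" by (rule s(3))
    show "hd xs < n" using s(5) ne hd_in_set by blast
  qed
  show "(\<lambda>(\<sigma>, xs). (\<sigma> \<circ> cycle_of_list xs, hd xs)) ` ?Sg \<subseteq> Pn \<times> {..<n}"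
  proof
    fix y assume "y \<in> (\<lambda>(\<sigma>, xs). (\<sigma> \<circ> cycle_of_list xs, hd xs)) ` ?Sg"
    then obtain \<sigma> xs where sx: "(\<sigma>, xs) \<in> ?Sg" "y = (\<sigma> \<circ> cycle_of_list xs, hd xs)" by auto
    have "perm_order \<sigma> = m" using sx(1) unfolding Pn_def by auto
    then show "y \<in> Pn \<times> {..<n}" using st(1,2,6)[OF sx(1)] sx(2) unfolding Pn_def by auto
  qed
  show "inj_on (\<lambda>(\<sigma>, xs). (\<sigma> \<circ> cycle_of_list xs, hd xs)) ?Sg"
  proof (rule inj_onI)
    fix p q assume p: "p \<in> ?Sg" and q: "q \<in> ?Sg"
      and eq: "(\<lambda>(\<sigma>, xs). (\<sigma> \<circ> cycle_of_list xs, hd xs)) p = (\<lambda>(\<sigma>, xs). (\<sigma> \<circ> cycle_of_list xs, hd xs)) q"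
    obtain \<sigma> xs where pe: "p = (\<sigma>, xs)" by (cases p)
    obtain \<sigma>' xs' where qe: "q = (\<sigma>', xs')" by (cases q)
    have a: "(\<sigma>, xs) \<in> ?Sg" "(\<sigma>', xs') \<in> ?Sg" using p q pe qe by auto
    have e: "\<sigma> \<circ> cycle_of_list xs = \<sigma>' \<circ> cycle_of_list xs'" "hd xs = hd xs'" using eq pe qe by auto
    have "xs = xs'" using st(3,5)[OF a(1)] st(3,5)[OF a(2)] e by metis
    moreover have "\<sigma> = \<sigma>'" using st(4)[OF a(1)] st(4)[OF a(2)] e \<open>xs = xs'\<close> by metis
    ultimately show "p = q" using pe qe by simp
  qed
qed

lemma badT_bound:
  fixes n d m :: nat and A :: real
  defines "Pn \<equiv> {p. p permutes {..<n} \<and> perm_order p = m}"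
  assumes d: "3 \<le> d" "d dvd m" "real (2 * d) \<le> A"
  shows "real (card {\<sigma>\<in>Pn. A < real (num_2cycles n \<sigma>)}) * (A / 2) ^ 3 \<le> real (card (Pn \<times> {..<n} \<times> {..<n}))"
proof (rule count_generic[where R = "R2 n" and d = d
      and \<Phi> = "\<lambda>(\<sigma>, xs). (tauT \<sigma> xs, hd xs, \<sigma> (hd xs))"])
  let ?Bad = "{\<sigma>\<in>Pn. A < real (num_2cycles n \<sigma>)}"
  let ?Sg = "Sigma ?Bad (\<lambda>\<sigma>. Lst d (R2 n \<sigma>))"
  have fP: "finite Pn" unfolding Pn_def by (rule finite_Pn)
  then show "finite ?Bad" by simp
  show "\<forall>\<sigma>\<in>?Bad. finite (R2 n \<sigma>)" unfolding R2_def by simp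
  show "\<forall>\<sigma>\<in>?Bad. A < real (card (R2 n \<sigma>))" using num_2cycles_eq unfolding Pn_def by auto
  show "3 \<le> d" "real (2 * d) \<le> A" using d by auto
  show "finite (Pn \<times> {..<n} \<times> {..<n})" using fP by simp
  have st: "tauT \<sigma> xs permutes {..<n}" "perm_order (tauT \<sigma> xs) = perm_order \<sigma>"
    "xs = map (\<lambda>i. (tauT \<sigma> xs ^^ i) (hd xs)) [0..<length xs]"
    "map \<sigma> xs = map (\<lambda>i. (tauT \<sigma> xs ^^ i) (\<sigma> (hd xs))) [0..<length xs]"
    "\<forall>y. y \<notin> set xs \<union> \<sigma> ` set xs \<longrightarrow> \<sigma> y = tauT \<sigma> xs y"
    "length xs = d" "hd xs < n" "\<sigma> (hd xs) < n" "\<forall>x\<in>set xs. \<sigma> (\<sigma> x) = x"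
    if "(\<sigma>, xs) \<in> ?Sg" for \<sigma> xs
  proof -
    have s: "\<sigma> permutes {..<n}" "perm_order \<sigma> = m" "length xs = d" "distinct xs"
      "set xs \<subseteq> R2 n \<sigma>" "A < real (num_2cycles n \<sigma>)"
      using that unfolding Pn_def Lst_def by auto
    have ne: "xs \<noteq> []" using s(3) d by auto
    have dv: "length xs dvd perm_order \<sigma>" using s d by simp
    have "card (set xs) = d" using s(3,4) distinct_card by blast
    moreover have "real d < real (card (R2 n \<sigma>))" using s(6) d num_2cycles_eq[OF s(1)] by simp
    ultimately have "card (set xs) < card (R2 n \<sigma>)" by simp
    then have "\<not> R2 n \<sigma> \<subseteq> set xs" using card_mono[of "set xs" "R2 n \<sigma>"] by auto
    then obtain z where z: "z \<in> R2 n \<sigma>" "z \<notin> set xs" by blast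
    note fs = twocyc_step[OF s(1) dv s(4) ne s(5) z]
    show "tauT \<sigma> xs permutes {..<n}" by (fact fs(1))
    show "perm_order (tauT \<sigma> xs) = perm_order \<sigma>" by (fact fs(2))
    show "xs = map (\<lambda>i. (tauT \<sigma> xs ^^ i) (hd xs)) [0..<length xs]" by (fact fs(3))
    show "map \<sigma> xs = map (\<lambda>i. (tauT \<sigma> xs ^^ i) (\<sigma> (hd xs))) [0..<length xs]" by (fact fs(4))
    show "\<forall>y. y \<notin> set xs \<union> \<sigma> ` set xs \<longrightarrow> \<sigma> y = tauT \<sigma> xs y" by (fact fs(5))
    show "length xs = d" by (rule s(3))
    have h: "hd xs \<in> R2 n \<sigma>" using s(5) ne hd_in_set by blast
    then show "hd xs < n" unfolding R2_def by simp
    show "\<sigma> (hd xs) < n" using h permutes_in_image[OF s(1)] unfolding R2_def by simp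
    show "\<forall>x\<in>set xs. \<sigma> (\<sigma> x) = x" using s(5) unfolding R2_def by auto
  qed
  show "(\<lambda>(\<sigma>, xs). (tauT \<sigma> xs, hd xs, \<sigma> (hd xs))) ` ?Sg \<subseteq> Pn \<times> {..<n} \<times> {..<n}"
  proof
    fix y assume "y \<in> (\<lambda>(\<sigma>, xs). (tauT \<sigma> xs, hd xs, \<sigma> (hd xs))) ` ?Sg"
    then obtain \<sigma> xs where sx: "(\<sigma>, xs) \<in> ?Sg" "y = (tauT \<sigma> xs, hd xs, \<sigma> (hd xs))" by auto
    have "perm_order \<sigma> = m" using sx(1) unfolding Pn_def by auto
    then show "y \<in> Pn \<times> {..<n} \<times> {..<n}" using st(1,2,7,8)[OF sx(1)] sx(2) unfolding Pn_def by auto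
  qed
  show "inj_on (\<lambda>(\<sigma>, xs). (tauT \<sigma> xs, hd xs, \<sigma> (hd xs))) ?Sg"
  proof (rule inj_onI)
    fix p q assume p: "p \<in> ?Sg" and q: "q \<in> ?Sg"
      and eq: "(\<lambda>(\<sigma>, xs). (tauT \<sigma> xs, hd xs, \<sigma> (hd xs))) p = (\<lambda>(\<sigma>, xs). (tauT \<sigma> xs, hd xs, \<sigma> (hd xs))) q"
    obtain \<sigma> xs where pe: "p = (\<sigma>, xs)" by (cases p)
    obtain \<sigma>' xs' where qe: "q = (\<sigma>', xs')" by (cases q)
    have a: "(\<sigma>, xs) \<in> ?Sg" "(\<sigma>', xs') \<in> ?Sg" using p q pe qe by auto
    have e: "tauT \<sigma> xs = tauT \<sigma>' xs'" "hd xs = hd xs'" "\<sigma> (hd xs) = \<sigma>' (hd xs')" using eq pe qe by auto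
    have xe: "xs = xs'" using st(3,6)[OF a(1)] st(3,6)[OF a(2)] e by metis
    have me: "map \<sigma> xs = map \<sigma>' xs" using st(4,6)[OF a(1)] st(4,6)[OF a(2)] e xe by metis
    then have agree: "\<forall>x\<in>set xs. \<sigma> x = \<sigma>' x" by (simp add: map_eq_conv)
    then have im: "\<sigma> ` set xs = \<sigma>' ` set xs" by (auto simp: image_def)
    have "\<sigma> y = \<sigma>' y" for y
    proof (cases "y \<in> set xs \<union> \<sigma> ` set xs")
      case True
      then show ?thesis
      proof
        assume "y \<in> set xs" then show ?thesis using agree by simp
      next
        assume "y \<in> \<sigma> ` set xs"
        then obtain x where x: "x \<in> set xs" "y = \<sigma> x" by auto
        then have "\<sigma> y = x" using st(9)[OF a(1)] by simp
        moreover have "\<sigma>' y = x" using x agree st(9)[OF a(2)] xe by simp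
        ultimately show ?thesis by simp
      qed
    next
      case False
      then have "y \<notin> set xs' \<union> \<sigma>' ` set xs'" using im xe by simp
      then show ?thesis using False st(5)[OF a(1)] st(5)[OF a(2)] e by metis
    qed
    then show "p = q" using xe pe qe by auto
  qed
qed


lemma ratio_bound:
  fixes n dd mm :: nat and A B u v :: real
  defines "Pn \<equiv> {p. p permutes {..<n} \<and> perm_order p = mm}"
  assumes d: "3 \<le> dd" "dd dvd mm" and ne: "Pn \<noteq> {}"
    and AB: "real (2*dd) \<le> A" "0 < u" "u \<le> A" "real (2*dd) \<le> B" "0 < v" "v \<le> B"
  shows "1 - 8 * real n / u^3 - 8 * real n^2 / v^3 \<le>
    real (card {p. p permutes {..<n} \<and> perm_order p = mm \<and> real (num_fixed_points n p) \<le> A \<and> real (num_2cycles n p) \<le> B})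
    / real (card Pn)"
proof -
  let ?G = "{p. p permutes {..<n} \<and> perm_order p = mm \<and> real (num_fixed_points n p) \<le> A \<and> real (num_2cycles n p) \<le> B}"
  let ?F = "{\<sigma>\<in>Pn. A < real (num_fixed_points n \<sigma>)}"
  let ?T = "{\<sigma>\<in>Pn. B < real (num_2cycles n \<sigma>)}"
  have fP: "finite Pn" unfolding Pn_def by (rule finite_Pn)
  have cP: "0 < card Pn" using fP ne card_gt_0_iff by blast
  have hF: "real (card ?F) * (A / 2) ^ 3 \<le> real (card (Pn \<times> {..<n}))"
    using badF_bound[OF d AB(1)] unfolding Pn_def by simp
  have hT: "real (card ?T) * (B / 2) ^ 3 \<le> real (card (Pn \<times> {..<n} \<times> {..<n}))"
    using badT_bound[OF d AB(4)] unfolding Pn_def by simp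
  have "real (card ?F) * (u / 2) ^ 3 \<le> real (card ?F) * (A / 2) ^ 3"
    using AB by (intro mult_left_mono power_mono) auto
  with hF have "real (card ?F) * (u / 2) ^ 3 \<le> real (card Pn) * real n"
    by (simp add: card_cartesian_product)
  then have "real (card ?F) * u ^ 3 \<le> 8 * real n * real (card Pn)"
    by (simp add: power_divide field_simps)
  then have F: "real (card ?F) \<le> (8 * real n / u ^ 3) * real (card Pn)"
    using AB by (simp add: field_simps)
  have "real (card ?T) * (v / 2) ^ 3 \<le> real (card ?T) * (B / 2) ^ 3"
    using AB by (intro mult_left_mono power_mono) auto
  with hT have "real (card ?T) * (v / 2) ^ 3 \<le> real (card Pn) * (real n * real n)"
    by (simp add: card_cartesian_product)
  then have "real (card ?T) * v ^ 3 \<le> 8 * real n ^ 2 * real (card Pn)"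
    by (simp add: power_divide field_simps power2_eq_square)
  then have T: "real (card ?T) \<le> (8 * real n ^ 2 / v ^ 3) * real (card Pn)"
    using AB by (simp add: field_simps)
  have sub: "Pn \<subseteq> ?G \<union> ?F \<union> ?T" unfolding Pn_def by auto
  have "card Pn \<le> card (?G \<union> ?F \<union> ?T)"
    using fP by (intro card_mono[OF _ sub]) (auto intro: finite_subset[OF _ fP] simp: Pn_def)
  also have "\<dots> \<le> card ?G + card ?F + card ?T"
    by (meson add_le_mono card_Un_le le_refl order_trans)
  finally have U: "real (card Pn) \<le> real (card ?G) + real (card ?F) + real (card ?T)"
    by linarith
  have "(1 - 8 * real n / u^3 - 8 * real n^2 / v^3) * real (card Pn) \<le> real (card ?G)"
    using U F T by (simp add: algebra_simps)
  then show ?thesis using cP by (simp add: pos_le_divide_eq)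
qed


theorem lemma5p7:
  fixes m d :: "nat \<Rightarrow> nat"
  assumes order: "eventually (\<lambda>n. \<exists>p. p permutes {..<n} \<and> perm_order p = m n) at_top"
    and div: "eventually (\<lambda>n. d n dvd m n \<and> 3 \<le> d n) at_top"
    and small: "(\<lambda>n. real (d n)) \<in> o(\<lambda>n. sqrt (real n))"
  shows "\<exists>a b :: nat \<Rightarrow> real.
           a \<in> o(\<lambda>n. sqrt (real n)) \<and> b \<in> o(\<lambda>n. real n) \<and>
           ((\<lambda>n. real (card {p. p permutes {..<n} \<and> perm_order p = m n \<and>
                        real (num_fixed_points n p) \<le> a n \<and> real (num_2cycles n p) \<le> b n})
                 / real (card {p. p permutes {..<n} \<and> perm_order p = m n}))
             \<longlongrightarrow> 1) at_top"
proof -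
  define a :: "nat \<Rightarrow> real" where "a = (\<lambda>n. 2 * real (d n) + real n powr (2/5))"
  define b :: "nat \<Rightarrow> real" where "b = (\<lambda>n. 2 * real (d n) + real n powr (4/5))"
  have d2: "(\<lambda>n. 2 * real (d n)) \<in> o(\<lambda>n. sqrt (real n))"
    using small by (subst landau_o.small.cmult_in_iff) auto
  have p1: "(\<lambda>n::nat. real n powr (2/5)) \<in> o(\<lambda>n. sqrt (real n))" by real_asymp
  have ha: "a \<in> o(\<lambda>n. sqrt (real n))" unfolding a_def by (rule sum_in_smallo(1)[OF d2 p1])
  have sq: "(\<lambda>n::nat. sqrt (real n)) \<in> o(\<lambda>n. real n)" by real_asymp
  have p2: "(\<lambda>n::nat. real n powr (4/5)) \<in> o(\<lambda>n. real n)" by real_asymp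
  have hb: "b \<in> o(\<lambda>n. real n)" unfolding b_def
    by (rule sum_in_smallo(1)[OF landau_o.small_trans[OF d2 sq] p2])
  define f where "f = (\<lambda>n::nat. 1 - 8 * real n / (real n powr (2/5))^3 - 8 * real n^2 / (real n powr (4/5))^3)"
  have flim: "(f \<longlongrightarrow> 1) at_top" unfolding f_def by real_asymp
  let ?r = "\<lambda>n. real (card {p. p permutes {..<n} \<and> perm_order p = m n \<and>
                        real (num_fixed_points n p) \<le> a n \<and> real (num_2cycles n p) \<le> b n})
                 / real (card {p. p permutes {..<n} \<and> perm_order p = m n})"
  have ev1: "eventually (\<lambda>n::nat. 1 \<le> n) at_top" using eventually_ge_at_top[of "1::nat"] by simp
  have low: "eventually (\<lambda>n. f n \<le> ?r n) at_top"
    using order div ev1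
  proof eventually_elim
    case (elim n)
    then have ne: "{p. p permutes {..<n} \<and> perm_order p = m n} \<noteq> {}" by auto
    have pos: "0 < real n powr (2/5)" "0 < real n powr (4/5)" using elim by auto
    show ?case unfolding f_def
      by (rule ratio_bound[OF _ _ ne]) (use elim pos in \<open>auto simp: a_def b_def\<close>)
  qed
  have up: "eventually (\<lambda>n. ?r n \<le> 1) at_top"
  proof (rule always_eventually, rule allI)
    fix n
    have fP: "finite {p. p permutes {..<n} \<and> perm_order p = m n}" by (rule finite_Pn)
    have "card {p. p permutes {..<n} \<and> perm_order p = m n \<and>
                        real (num_fixed_points n p) \<le> a n \<and> real (num_2cycles n p) \<le> b n}
          \<le> card {p. p permutes {..<n} \<and> perm_order p = m n}"
      by (rule card_mono[OF fP]) auto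
    moreover have "x \<le> y \<Longrightarrow> real x / real y \<le> 1" for x y :: nat
      by (cases "y = 0") (auto simp: divide_le_eq_1)
    ultimately show "?r n \<le> 1" by blast
  qed
  have "(?r \<longlongrightarrow> 1) at_top"
    by (rule tendsto_sandwich[OF low up flim tendsto_const])
  then show ?thesis using ha hb by blast
qed

end
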